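(* Let $D$ be a regular $(v,k,\lambda,\mu)$-PDS in a finite group $G$ with $0<\mu<k$ and $\sqrt\Delta\in\mathbb{Z}$. If $\xi$ and $\chi$ are nonprincipal linear characters of $G$ whose orders are both coprime to $\sqrt\Delta$, then $\xi(D)=\chi(D)$.
   Context: A $(v,k,\lambda,\mu)$-PDS in a group $G$ of order $v$ is a $k$-subset $D$ such that every nonidentity element of $D$ is $xy^{-1}$ ($x,y\in D$) in exactly $\lambda$ ways and every nonidentity element of $G\setminus D$ in exactly $\mu$ ways; regular means $D=D^{(-1)}$ and $1\notin D$. $\Delta=(\lambda-\mu)^2+4(k-\mu)$; $\chi(D)=\sum_{d\in D}\chi(d)$. *)

theory Defs
  imports "HOL-Algebra.Group" "HOL-Computational_Algebra.Primes" Complex_Main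
begin

definition diff_count :: "('a, 'b) monoid_scheme \<Rightarrow> 'a set \<Rightarrow> 'a \<Rightarrow> nat" where
  "diff_count G D g = card {(x, y). x \<in> D \<and> y \<in> D \<and> x \<otimes>\<^bsub>G\<^esub> inv\<^bsub>G\<^esub> y = g}"

definition is_PDS :: "('a, 'b) monoid_scheme \<Rightarrow> 'a set \<Rightarrow> nat \<Rightarrow> nat \<Rightarrow> nat \<Rightarrow> nat \<Rightarrow> bool" where
  "is_PDS G D v k lam mu \<longleftrightarrow>
     D \<subseteq> carrier G \<and> card (carrier G) = v \<and> card D = k \<and>
     (\<forall>g \<in> D - {\<one>\<^bsub>G\<^esub>}. diff_count G D g = lam) \<and>
     (\<forall>g \<in> carrier G - D - {\<one>\<^bsub>G\<^esub>}. diff_count G D g = mu)"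

definition regular_PDS :: "('a, 'b) monoid_scheme \<Rightarrow> 'a set \<Rightarrow> bool" where
  "regular_PDS G D \<longleftrightarrow> D = (\<lambda>x. inv\<^bsub>G\<^esub> x) ` D \<and> \<one>\<^bsub>G\<^esub> \<notin> D"

definition PDS_Delta :: "nat \<Rightarrow> nat \<Rightarrow> nat \<Rightarrow> int" where
  "PDS_Delta k lam mu = (int lam - int mu)^2 + 4 * (int k - int mu)"

definition linear_char :: "('a, 'b) monoid_scheme \<Rightarrow> ('a \<Rightarrow> complex) \<Rightarrow> bool" where
  "linear_char G \<chi> \<longleftrightarrow> (\<forall>x \<in> carrier G. \<chi> x \<noteq> 0) \<and>
     (\<forall>x \<in> carrier G. \<forall>y \<in> carrier G. \<chi> (x \<otimes>\<^bsub>G\<^esub> y) = \<chi> x * \<chi> y)"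

definition principal_char :: "('a, 'b) monoid_scheme \<Rightarrow> ('a \<Rightarrow> complex) \<Rightarrow> bool" where
  "principal_char G \<chi> \<longleftrightarrow> (\<forall>x \<in> carrier G. \<chi> x = 1)"

definition char_order :: "('a, 'b) monoid_scheme \<Rightarrow> ('a \<Rightarrow> complex) \<Rightarrow> nat" where
  "char_order G \<chi> = (LEAST n. 0 < n \<and> (\<forall>x \<in> carrier G. \<chi> x ^ n = 1))"

definition char_sum :: "('a \<Rightarrow> complex) \<Rightarrow> 'a set \<Rightarrow> complex" where
  "char_sum \<chi> D = (\<Sum>d \<in> D. \<chi> d)"

end

theory Submission
  imports Defs "Jordan_Normal_Form.Char_Poly"
begin

lemma power_mod_root: fixes u :: complex
  assumes "u ^ n = 1" shows "u ^ (m mod n) = u ^ m"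
proof -
  have "u ^ m = u ^ (n * (m div n) + m mod n)" by simp
  also have "\<dots> = (u ^ n) ^ (m div n) * u ^ (m mod n)" by (simp only: power_add power_mult)
  finally show ?thesis using assms by simp
qed

lemma alg_int_root_sum:
  fixes u :: complex and S :: "nat set" and n :: nat
  assumes n: "n > 0" and u: "u ^ n = 1" and S: "S \<subseteq> {..<n}"
  shows "algebraic_int (\<Sum>t\<in>S. u ^ t)"
proof -
  define x where "x = (\<Sum>t\<in>S. u ^ t)"
  define A :: "int mat" where "A = mat n n (\<lambda>(i,j). int (card {t\<in>S. (i+t) mod n = j}))"
  define B :: "complex mat" where "B = map_mat of_int A"
  define w :: "complex vec" where "w = vec n (\<lambda>i. u ^ i)"
  have finS: "finite S" using S finite_subset by blast
  have A: "A \<in> carrier_mat n n" unfolding A_def by auto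
  have B: "B \<in> carrier_mat n n" unfolding B_def using A by auto
  have "B *\<^sub>v w = x \<cdot>\<^sub>v w"
  proof (rule eq_vecI)
    fix i assume i: "i < dim_vec (x \<cdot>\<^sub>v w)"
    hence i: "i < n" unfolding w_def by simp
    have "(B *\<^sub>v w) $ i = (\<Sum>j<n. of_int (A $$ (i,j)) * u ^ j)"
      using i B unfolding B_def w_def by (simp add: mult_mat_vec_def scalar_prod_def A_def atLeast0LessThan)
    also have "\<dots> = (\<Sum>j<n. (\<Sum>t\<in>{t\<in>S. (i+t) mod n = j}. u ^ ((i+t) mod n)))"
      using i by (intro sum.cong refl) (simp add: A_def)
    also have "\<dots> = (\<Sum>t\<in>S. u ^ ((i+t) mod n))"
      by (rule sum.group) (use finS n in auto)
    also have "\<dots> = (\<Sum>t\<in>S. u ^ i * u ^ t)"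
      by (intro sum.cong refl) (simp add: power_mod_root[OF u] power_add)
    also have "\<dots> = x * w $ i" using i unfolding x_def w_def by (simp add: sum_distrib_left mult.commute)
    finally show "(B *\<^sub>v w) $ i = (x \<cdot>\<^sub>v w) $ i" using i unfolding w_def by simp
  qed (use B in \<open>simp add: w_def\<close>)
  moreover have "w \<noteq> 0\<^sub>v n"
  proof
    assume "w = 0\<^sub>v n"
    hence "w $ 0 = 0" using n by simp
    thus False using n unfolding w_def by simp
  qed
  ultimately have "eigenvector B w x" unfolding eigenvector_def w_def using B by auto
  hence "eigenvalue B x" unfolding eigenvalue_def by auto
  hence "poly (char_poly B) x = 0" using eigenvalue_root_char_poly[OF B] by simp
  moreover have "char_poly B = map_poly of_int (char_poly A)"
    unfolding B_def by (rule of_int_hom.char_poly_hom[OF A])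
  moreover have "lead_coeff (char_poly A) = 1" using degree_monic_char_poly[OF A] by simp
  ultimately show ?thesis unfolding x_def[symmetric] algebraic_int_altdef_ipoly by auto
qed

context group begin

lemma lc_one: assumes "linear_char G \<psi>" shows "\<psi> \<one> = 1"
proof -
  have "\<psi> (\<one> \<otimes> \<one>) = \<psi> \<one> * \<psi> \<one>" using assms unfolding linear_char_def
    by blast
  hence "\<psi> \<one> = \<psi> \<one> * \<psi> \<one>" by simp
  moreover have "\<psi> \<one> \<noteq> 0" using assms unfolding linear_char_def by auto
  ultimately show ?thesis
    by (metis mult_cancel_left2)
qed

lemma lc_inv: assumes "linear_char G \<psi>" "x \<in> carrier G" shows "\<psi> (inv x) * \<psi> x = 1"
  using assms lc_one[OF assms(1)] unfolding linear_char_def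
  by (metis inv_closed l_inv)

lemma lc_nz: assumes "linear_char G \<psi>" "x \<in> carrier G" shows "\<psi> x \<noteq> 0"
  using assms unfolding linear_char_def by auto

lemma lc_pow: assumes "linear_char G \<psi>" shows "linear_char G (\<lambda>x. \<psi> x ^ t)"
  using assms unfolding linear_char_def by (auto simp: power_mult_distrib)

lemma lc_mult: assumes "linear_char G \<psi>" "linear_char G \<phi>"
  shows "linear_char G (\<lambda>x. \<psi> x * \<phi> x)"
  using assms unfolding linear_char_def by (auto simp: algebra_simps)

lemma bij_lmult: assumes "h \<in> carrier G" shows "bij_betw (\<lambda>g. h \<otimes> g) (carrier G) (carrier G)"
proof (rule bij_betwI[where g="\<lambda>g. inv h \<otimes> g"])
qed (use assms in \<open>auto simp: m_assoc[symmetric]\<close>)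

lemma lc_sum_zero:
  assumes "finite (carrier G)" "linear_char G \<psi>" "\<not> principal_char G \<psi>"
  shows "(\<Sum>g\<in>carrier G. \<psi> g) = 0"
proof -
  obtain h where h: "h \<in> carrier G" "\<psi> h \<noteq> 1" using assms(3) unfolding principal_char_def by auto
  have "(\<Sum>g\<in>carrier G. \<psi> g) = (\<Sum>g\<in>carrier G. \<psi> (h \<otimes> g))"
    using sum.reindex_bij_betw[OF bij_lmult[OF h(1)], of \<psi>] by simp
  also have "\<dots> = \<psi> h * (\<Sum>g\<in>carrier G. \<psi> g)"
    using assms(2) h unfolding linear_char_def by (simp add: sum_distrib_left)
  finally have "(\<psi> h - 1) * (\<Sum>g\<in>carrier G. \<psi> g) = 0" by (simp add: algebra_simps)
  thus ?thesis using h by simp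
qed

lemma lc_root:
  assumes "finite (carrier G)" "linear_char G \<psi>" "x \<in> carrier G"
  shows "\<psi> x ^ card (carrier G) = 1"
proof -
  have "(\<Prod>g\<in>carrier G. \<psi> g) = (\<Prod>g\<in>carrier G. \<psi> (x \<otimes> g))"
    using prod.reindex_bij_betw[OF bij_lmult[OF assms(3)], of \<psi>] by simp
  also have "\<dots> = (\<Prod>g\<in>carrier G. \<psi> x * \<psi> g)"
    using assms unfolding linear_char_def by (intro prod.cong) auto
  also have "\<dots> = \<psi> x ^ card (carrier G) * (\<Prod>g\<in>carrier G. \<psi> g)"
    by (simp add: prod.distrib)
  finally have "(\<psi> x ^ card (carrier G) - 1) * (\<Prod>g\<in>carrier G. \<psi> g) = 0" by (simp add: algebra_simps)
  moreover have "(\<Prod>g\<in>carrier G. \<psi> g) \<noteq> 0" using assms lc_nz by (simp add: prod_zero_iff)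
  ultimately show ?thesis by simp
qed

lemma ord_props:
  assumes "finite (carrier G)" "linear_char G \<psi>"
  shows "0 < char_order G \<psi>" "\<And>x. x \<in> carrier G \<Longrightarrow> \<psi> x ^ char_order G \<psi> = 1"
proof -
  have "card (carrier G) > 0" using assms(1) one_closed card_gt_0_iff by blast
  hence ex: "\<exists>n. 0 < n \<and> (\<forall>x\<in>carrier G. \<psi> x ^ n = 1)"
    using lc_root[OF assms] by blast
  have L: "0 < char_order G \<psi> \<and> (\<forall>x\<in>carrier G. \<psi> x ^ char_order G \<psi> = 1)"
    unfolding char_order_def by (rule LeastI_ex[OF ex])
  show "0 < char_order G \<psi>" "\<And>x. x \<in> carrier G \<Longrightarrow> \<psi> x ^ char_order G \<psi> = 1"
    using L by blast+
qed

lemma ord_dvd: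
  assumes "finite (carrier G)" "linear_char G \<psi>" "\<forall>x\<in>carrier G. \<psi> x ^ m = 1"
  shows "char_order G \<psi> dvd m"
proof -
  let ?n = "char_order G \<psi>"
  have n: "0 < ?n" and pn: "\<And>x. x \<in> carrier G \<Longrightarrow> \<psi> x ^ ?n = 1" using ord_props[OF assms(1,2)] by auto
  have r: "\<psi> x ^ (m mod ?n) = 1" if "x \<in> carrier G" for x
  proof -
    have "\<psi> x ^ m = \<psi> x ^ (?n * (m div ?n) + m mod ?n)" by simp
    also have "\<dots> = (\<psi> x ^ ?n) ^ (m div ?n) * \<psi> x ^ (m mod ?n)"
      by (simp only: power_add power_mult)
    finally show ?thesis using that pn[OF that] assms(3) by simp
  qed
  show ?thesis
  proof (rule ccontr)
    assume "\<not> ?n dvd m"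
    hence "0 < m mod ?n" using mod_eq_0_iff_dvd by fastforce
    hence P: "0 < m mod ?n \<and> (\<forall>x\<in>carrier G. \<psi> x ^ (m mod ?n) = 1)" using r by blast
    have "?n \<le> m mod ?n"
      using Least_le[of "\<lambda>n. 0 < n \<and> (\<forall>x\<in>carrier G. \<psi> x ^ n = 1)", OF P]
      unfolding char_order_def .
    thus False using n by (meson mod_less_divisor not_le)
  qed
qed

lemma ord_pow_iff:
  assumes "finite (carrier G)" "linear_char G \<psi>"
  shows "(\<forall>x\<in>carrier G. \<psi> x ^ m = 1) \<longleftrightarrow> char_order G \<psi> dvd m"
proof
  assume "char_order G \<psi> dvd m"
  then obtain q where "m = char_order G \<psi> * q" by auto
  thus "\<forall>x\<in>carrier G. \<psi> x ^ m = 1" using ord_props[OF assms] by (simp add: power_mult)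
qed (use ord_dvd[OF assms] in auto)

lemma principal_iff:
  assumes "finite (carrier G)" "linear_char G \<psi>"
  shows "principal_char G \<psi> \<longleftrightarrow> char_order G \<psi> = 1"
  using ord_pow_iff[OF assms, of 1] unfolding principal_char_def by auto

end

context group begin

lemma inv_sum_D:
  assumes "regular_PDS G D" "D \<subseteq> carrier G"
  shows "(\<Sum>y\<in>D. f (inv y)) = (\<Sum>y\<in>D. f y)"
proof -
  have inj: "inj_on (\<lambda>x. inv x) D" using assms(2) by (intro inj_onI) (metis inv_inv subsetD)
  have "(\<Sum>y\<in>D. f y) = (\<Sum>y\<in>(\<lambda>x. inv x) ` D. f y)"
    using assms(1) unfolding regular_PDS_def by metis
  also have "\<dots> = (\<Sum>y\<in>D. f (inv y))" by (rule sum.reindex[OF inj, unfolded comp_def])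
  finally show ?thesis by simp
qed

lemma quad:
  assumes fin: "finite (carrier G)" and pds: "is_PDS G D v k lam mu" and reg: "regular_PDS G D"
    and lc: "linear_char G \<psi>" and np: "\<not> principal_char G \<psi>"
  shows "char_sum \<psi> D ^ 2 = of_int (int lam - int mu) * char_sum \<psi> D + of_int (int k - int mu)"
proof -
  have DG: "D \<subseteq> carrier G" and cD: "card D = k"
    and dl: "\<And>g. g \<in> D - {\<one>} \<Longrightarrow> diff_count G D g = lam"
    and dm: "\<And>g. g \<in> carrier G - D - {\<one>} \<Longrightarrow> diff_count G D g = mu"
    using pds unfolding is_PDS_def by auto
  have one: "\<one> \<notin> D" using reg unfolding regular_PDS_def by auto
  have finD: "finite D" using DG fin finite_subset by blast
  have DG': "\<And>x. x \<in> D \<Longrightarrow> x \<in> carrier G" using DG by blast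
  have mul: "\<And>x y. x \<in> carrier G \<Longrightarrow> y \<in> carrier G \<Longrightarrow> \<psi> (x \<otimes> y) = \<psi> x * \<psi> y"
    using lc unfolding linear_char_def by blast
  define f where "f = (\<lambda>p. fst p \<otimes> inv (snd p))"
  define z where "z = char_sum \<psi> D"
  have "z ^ 2 = (\<Sum>x\<in>D. \<psi> x) * (\<Sum>y\<in>D. \<psi> (inv y))"
    unfolding z_def char_sum_def power2_eq_square using inv_sum_D[OF reg DG, of \<psi>] by simp
  also have "\<dots> = (\<Sum>x\<in>D. \<Sum>y\<in>D. \<psi> (x \<otimes> inv y))"
    unfolding sum_product
    by (intro sum.cong refl) (simp add: mul DG')
  also have "\<dots> = (\<Sum>p\<in>D \<times> D. \<psi> (f p))"
    unfolding f_def sum.cartesian_product by (simp add: case_prod_beta)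
  also have "\<dots> = (\<Sum>g\<in>carrier G. \<Sum>p\<in>{p\<in>D \<times> D. f p = g}. \<psi> (f p))"
    by (rule sum.group[symmetric]) (use finD fin DG' in \<open>auto simp: f_def\<close>)
  also have "\<dots> = (\<Sum>g\<in>carrier G. of_nat (diff_count G D g) * \<psi> g)"
  proof (intro sum.cong refl)
    fix g assume "g \<in> carrier G"
    have "{p\<in>D \<times> D. f p = g} = {(x, y). x \<in> D \<and> y \<in> D \<and> x \<otimes> inv y = g}"
      unfolding f_def by auto
    hence "(\<Sum>p\<in>{p\<in>D \<times> D. f p = g}. \<psi> (f p)) = (\<Sum>p\<in>{p\<in>D \<times> D. f p = g}. \<psi> g)"
      by (intro sum.cong) (auto simp: f_def)
    also have "\<dots> = of_nat (diff_count G D g) * \<psi> g"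
      unfolding diff_count_def using \<open>{p\<in>D \<times> D. f p = g} = _\<close> by simp
    finally show "(\<Sum>p\<in>{p\<in>D \<times> D. f p = g}. \<psi> (f p)) = of_nat (diff_count G D g) * \<psi> g" .
  qed
  finally have z2: "z ^ 2 = (\<Sum>g\<in>carrier G. of_nat (diff_count G D g) * \<psi> g)" .
  define R where "R = carrier G - D - {\<one>}"
  have split: "carrier G - {\<one>} = D \<union> R" "D \<inter> R = {}" using DG one unfolding R_def by auto
  have finR: "finite R" unfolding R_def using fin by auto
  have "diff_count G D \<one> = k"
  proof -
    have "{(x, y). x \<in> D \<and> y \<in> D \<and> x \<otimes> inv y = \<one>} = (\<lambda>x. (x, x)) ` D"
    proof (safe)
      fix x y assume "x \<in> D" "y \<in> D" "x \<otimes> inv y = \<one>"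
      hence "x = y" using DG by (metis inv_equality inv_inv subsetD inv_closed)
      thus "(x, y) \<in> (\<lambda>x. (x, x)) ` D" using \<open>x \<in> D\<close> by auto
    next
      fix x assume "x \<in> D" thus "x \<otimes> inv x = \<one>" using DG by auto
    qed
    moreover have "card ((\<lambda>x. (x, x)) ` D) = card D" by (rule card_image) (auto intro: inj_onI)
    ultimately show ?thesis unfolding diff_count_def using cD by simp
  qed
  have sG: "(\<Sum>g\<in>carrier G. \<psi> g) = 0" by (rule lc_sum_zero[OF fin lc np])
  have "(\<Sum>g\<in>carrier G. \<psi> g) = \<psi> \<one> + (\<Sum>g\<in>carrier G - {\<one>}. \<psi> g)"
    by (rule sum.remove[OF fin one_closed])
  also have "\<dots> = 1 + z + (\<Sum>g\<in>R. \<psi> g)"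
    unfolding split(1) z_def char_sum_def using sum.union_disjoint[OF finD finR split(2)] lc_one[OF lc] by simp
  finally have "1 + z + (\<Sum>g\<in>R. \<psi> g) = 0" using sG by simp
  hence sR: "(\<Sum>g\<in>R. \<psi> g) = - 1 - z" by (simp add: algebra_simps eq_neg_iff_add_eq_0)
  have "(\<Sum>g\<in>carrier G. of_nat (diff_count G D g) * \<psi> g)
      = of_nat (diff_count G D \<one>) * \<psi> \<one> + (\<Sum>g\<in>carrier G - {\<one>}. of_nat (diff_count G D g) * \<psi> g)"
    by (rule sum.remove[OF fin one_closed])
  also have "\<dots> = of_nat k + ((\<Sum>g\<in>D. of_nat (diff_count G D g) * \<psi> g) + (\<Sum>g\<in>R. of_nat (diff_count G D g) * \<psi> g))"
    unfolding split(1) using sum.union_disjoint[OF finD finR split(2)] lc_one[OF lc] \<open>diff_count G D \<one> = k\<close>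
    by simp
  also have "(\<Sum>g\<in>D. of_nat (diff_count G D g) * \<psi> g) = (\<Sum>g\<in>D. of_nat lam * \<psi> g)"
    using dl one by (intro sum.cong refl) (metis Diff_iff singletonD)
  also have "(\<Sum>g\<in>R. of_nat (diff_count G D g) * \<psi> g) = (\<Sum>g\<in>R. of_nat mu * \<psi> g)"
    using dm unfolding R_def by (intro sum.cong refl) simp
  also have "of_nat k + ((\<Sum>g\<in>D. of_nat lam * \<psi> g) + (\<Sum>g\<in>R. of_nat mu * \<psi> g))
     = of_nat k + of_nat lam * z + of_nat mu * (- 1 - z)"
    unfolding sum_distrib_left[symmetric] sR unfolding z_def char_sum_def by simp
  finally show ?thesis using z2 unfolding z_def by (simp add: algebra_simps)
qed

end

lemma quad_values:
  fixes z :: complex and s lam mu k :: nat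
  assumes "z ^ 2 = of_int (int lam - int mu) * z + of_int (int k - int mu)"
    and "int s ^ 2 = PDS_Delta k lam mu"
  shows "z = of_int ((int lam - int mu - int s) div 2) \<or> z = of_int ((int lam - int mu - int s) div 2 + int s)"
proof -
  define L where "L = int lam - int mu"
  have sq: "int s ^ 2 = L ^ 2 + 4 * (int k - int mu)" using assms(2) unfolding PDS_Delta_def L_def by simp
  have ev: "even (L - int s)"
  proof -
    have "even (int s ^ 2 - L ^ 2)" using sq by simp
    hence "even ((int s - L) * (int s + L))" by (simp add: power2_eq_square algebra_simps)
    hence "even (int s - L) \<or> even (int s + L)" by simp
    moreover have "(int s + L) = (int s - L) + 2 * L" by simp
    ultimately have "even (int s - L)" by (metis even_add even_mult_iff even_numeral)
    thus ?thesis by (metis even_minus minus_diff_eq)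
  qed
  define b where "b = (L - int s) div 2"
  have b2: "2 * b = L - int s" unfolding b_def using ev by simp
  have "(2 * z - of_int L) ^ 2 = of_int (int s) ^ 2"
  proof -
    have "(2 * z - of_int L) ^ 2 = 4 * z ^ 2 - 4 * of_int L * z + of_int L ^ 2"
      by (simp add: power2_eq_square algebra_simps)
    also have "\<dots> = 4 * (z ^ 2 - of_int L * z) + of_int L ^ 2"
      by (simp add: algebra_simps)
    also have "z ^ 2 - of_int L * z = of_int (int k - int mu)"
      using assms(1) unfolding L_def by simp
    also have "4 * of_int (int k - int mu) + of_int L ^ 2 = (of_int (L ^ 2 + 4 * (int k - int mu)) :: complex)"
      by simp
    also have "\<dots> = of_int (int s ^ 2)" using sq by simp
    also have "\<dots> = of_int (int s) ^ 2" by simp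
    finally show ?thesis .
  qed
  hence "2 * z - of_int L = of_int (int s) \<or> 2 * z - of_int L = - of_int (int s)"
    using power2_eq_iff by blast
  moreover have Lb: "(of_int L :: complex) = 2 * of_int b + of_int (int s)"
    using b2 by (metis add.commute diff_add_cancel of_int_add of_int_mult of_int_numeral)
  ultimately have "z = of_int b \<or> z = of_int (b + int s)"
  proof (elim disjE)
    assume "2 * z - of_int L = of_int (int s)"
    hence "2 * z = 2 * (of_int b + of_int (int s))" using Lb by (simp add: algebra_simps)
    hence "z = of_int b + of_int (int s)" by (metis mult_cancel_left zero_neq_numeral)
    thus ?thesis by simp
  next
    assume "2 * z - of_int L = - of_int (int s)"
    hence "2 * z = 2 * of_int b" using Lb by (simp add: algebra_simps)
    thus ?thesis by simp
  qed
  thus ?thesis unfolding b_def L_def .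
qed

lemma geom_root: fixes w :: complex assumes "w ^ n = 1" "0 < n"
  shows "(\<Sum>t<n. w ^ t) = (if w = 1 then of_nat n else 0)"
  using assms by (simp add: sum_gp_strict)

lemma norm_root1: fixes u :: complex assumes "u ^ n = 1" "0 < n" shows "norm u = 1"
proof -
  have "norm u ^ n = 1 ^ n" using assms(1) by (metis norm_one norm_power power_one)
  thus ?thesis using assms(2) by (meson norm_ge_zero power_eq_imp_eq_base zero_le_one)
qed

lemma two_vals:
  fixes f n :: int assumes "n dvd f" "- 2 * sg \<le> f" "f \<le> 0" "sg < n"
  shows "f * f = - n * f"
proof -
  obtain q where q: "f = n * q" using assms(1) by auto
  have n: "n > 0" using assms by linarith
  have "q \<le> 0" using q assms(3) n by (simp add: mult_le_0_iff)
  moreover have "q > -2"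
  proof (rule ccontr)
    assume "\<not> q > -2" hence "q \<le> -2" by simp
    hence "n * q \<le> n * (-2)" using n mult_left_mono[of q "-2" n] by linarith
    thus False using assms q by linarith
  qed
  ultimately have "q = 0 \<or> q = -1" by linarith
  thus ?thesis using q by auto
qed

context group begin

lemma nonprincipal_pow:
  assumes fin: "finite (carrier G)" and lc: "linear_char G \<psi>" and t: "0 < t" "t < char_order G \<psi>"
  shows "\<not> principal_char G (\<lambda>x. \<psi> x ^ t)"
proof
  assume "principal_char G (\<lambda>x. \<psi> x ^ t)"
  hence "char_order G \<psi> dvd t" using ord_dvd[OF fin lc] unfolding principal_char_def by auto
  thus False using t by (simp add: nat_dvd_not_less)
qed

lemma coreL:
  assumes fin: "finite (carrier G)" and pds: "is_PDS G D v k lam mu" and reg: "regular_PDS G D"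
    and sq: "int s ^ 2 = PDS_Delta k lam mu" and spos: "0 < s"
    and lc: "linear_char G \<psi>" and np: "\<not> principal_char G \<psi>"
    and cop: "coprime (char_order G \<psi>) s"
    and bdef: "b = (int lam - int mu - int s) div 2"
  shows "(char_sum \<psi> D = of_int b \<and> int (char_order G \<psi>) dvd int k - b) \<or>
         (char_sum \<psi> D = of_int (b + int s) \<and> int (char_order G \<psi>) dvd int k - (b + int s))"
proof -
  define n where "n = char_order G \<psi>"
  have n0: "0 < n" and pn: "\<And>x. x \<in> carrier G \<Longrightarrow> \<psi> x ^ n = 1"
    using ord_props[OF fin lc] unfolding n_def by auto
  have n2: "2 \<le> n" using n0 principal_iff[OF fin lc] np unfolding n_def by linarith
  have DG: "D \<subseteq> carrier G" and cD: "card D = k" and cG: "card (carrier G) = v"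
    using pds unfolding is_PDS_def by auto
  have DG': "\<And>x. x \<in> D \<Longrightarrow> x \<in> carrier G" using DG by blast
  have finD: "finite D" using DG fin finite_subset by blast
  have v0: "0 < v" using cG fin one_closed card_gt_0_iff by blast
  define z where "z = (\<lambda>t. char_sum (\<lambda>x. \<psi> x ^ t) D)"
  have zval: "z t = of_int b \<or> z t = of_int (b + int s)" if "0 < t" "t < n" for t
  proof -
    have "\<not> principal_char G (\<lambda>x. \<psi> x ^ t)" using nonprincipal_pow[OF fin lc] that unfolding n_def by auto
    from quad[OF fin pds reg lc_pow[OF lc] this]
    show ?thesis using quad_values[OF _ sq] unfolding z_def bdef by blast
  qed
  have z0: "z 0 = of_nat k" unfolding z_def char_sum_def using cD by simp
  define S where "S = {t \<in> {1..<n}. z t = of_int (b + int s)}"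
  define \<sigma> where "\<sigma> = card S"
  have S_sub: "S \<subseteq> {1..<n}" unfolding S_def by auto
  have finS: "finite S" using S_sub finite_subset by blast
  have \<sigma>_le: "\<sigma> \<le> n - 1" unfolding \<sigma>_def using card_mono[OF _ S_sub] by simp
  have zS: "z t = of_int b + of_int (int s) * (if t \<in> S then 1 else 0)" if "t \<in> {1..<n}" for t
    using zval[of t] that unfolding S_def by auto
  have Ssym: "n - t \<in> S" if "t \<in> S" for t
  proof -
    have t: "0 < t" "t < n" using that S_sub by auto
    have "\<psi> d ^ (n - t) = \<psi> (inv d) ^ t" if "d \<in> D" for d
    proof -
      have dG: "d \<in> carrier G" using that DG by auto
      have "\<psi> (inv d) ^ t * \<psi> d ^ t = 1" using lc_inv[OF lc dG] by (metis power_mult_distrib power_one)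
      moreover have "\<psi> d ^ (n - t) * \<psi> d ^ t = 1" using pn[OF dG] t by (simp flip: power_add)
      moreover have "\<psi> d ^ t \<noteq> 0" using lc_nz[OF lc dG] by simp
      ultimately show ?thesis by (metis mult_cancel_right)
    qed
    hence "z (n - t) = (\<Sum>d\<in>D. \<psi> (inv d) ^ t)" unfolding z_def char_sum_def by simp
    also have "\<dots> = z t" unfolding z_def char_sum_def by (rule inv_sum_D[OF reg DG])
    finally show ?thesis using that t unfolding S_def by auto
  qed
  define c where "c = (\<lambda>g. card {d \<in> D. \<psi> d * \<psi> g = 1})"
  define T where "T = (\<lambda>g. \<Sum>t\<in>S. \<psi> g ^ t)"
  define m where "m = (\<lambda>g. int n * int (c g) - int k - b * ((if \<psi> g = 1 then int n else 0) - 1))"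
  have E: "of_int (int s) * T g = of_int (m g)" if g: "g \<in> carrier G" for g
  proof -
    let ?u = "\<psi> g"
    have un: "?u ^ n = 1" using pn[OF g] .
    have "(\<Sum>t<n. z t * ?u ^ t) = (\<Sum>t<n. \<Sum>d\<in>D. (\<psi> d * ?u) ^ t)"
      unfolding z_def char_sum_def by (simp add: sum_distrib_right power_mult_distrib)
    also have "\<dots> = (\<Sum>d\<in>D. \<Sum>t<n. (\<psi> d * ?u) ^ t)" by (rule sum.swap)
    also have "\<dots> = (\<Sum>d\<in>D. if \<psi> d * ?u = 1 then of_nat n else 0)"
    proof (intro sum.cong refl geom_root[OF _ n0])
      fix d assume "d \<in> D"
      thus "(\<psi> d * ?u) ^ n = 1" using pn[OF DG'] un by (simp add: power_mult_distrib)
    qed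
    also have "\<dots> = of_nat n * of_nat (c g)"
      using finD by (simp add: sum.If_cases c_def Int_def mult.commute)
    finally have E1: "(\<Sum>t<n. z t * ?u ^ t) = of_nat n * of_nat (c g)" .
    have "(\<Sum>t<n. z t * ?u ^ t) = z 0 + (\<Sum>t\<in>{1..<n}. z t * ?u ^ t)"
      using n0 by (simp add: lessThan_atLeast0 sum.atLeast_Suc_lessThan)
    also have "(\<Sum>t\<in>{1..<n}. z t * ?u ^ t) = (\<Sum>t\<in>{1..<n}. of_int b * ?u ^ t + of_int (int s) * (if t \<in> S then ?u ^ t else 0))"
      by (intro sum.cong refl) (simp add: zS algebra_simps)
    also have "\<dots> = of_int b * (\<Sum>t\<in>{1..<n}. ?u ^ t) + of_int (int s) * T g"
    proof -
      have "(\<Sum>t\<in>{1..<n}. (if t \<in> S then ?u ^ t else 0)) = T g"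
        unfolding T_def using S_sub by (simp add: sum.If_cases Int_absorb1 Int_def[symmetric])
      thus ?thesis by (simp add: sum.distrib flip: sum_distrib_left)
    qed
    also have "(\<Sum>t\<in>{1..<n}. ?u ^ t) = (if ?u = 1 then of_nat n else 0) - 1"
    proof -
      have "(\<Sum>t<n. ?u ^ t) = 1 + (\<Sum>t\<in>{1..<n}. ?u ^ t)"
        using n0 by (simp add: lessThan_atLeast0 sum.atLeast_Suc_lessThan)
      thus ?thesis using geom_root[OF un n0] by simp
    qed
    finally have "of_nat n * of_nat (c g) = of_nat k + of_int b * ((if ?u = 1 then of_nat n else 0) - 1) + of_int (int s) * T g"
      using E1 z0 by simp
    thus ?thesis unfolding m_def by (simp add: algebra_simps)
  qed
  have Tint: "T g \<in> \<int>" if g: "g \<in> carrier G" for g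
  proof -
    have "T g = of_int (m g) / of_int (int s)" using E[OF g] spos by (simp add: field_simps)
    hence "T g \<in> \<rat>" by simp
    moreover have "algebraic_int (T g)" unfolding T_def
      by (rule alg_int_root_sum[OF n0 pn[OF g]]) (use S_sub in auto)
    ultimately show ?thesis using rational_algebraic_int_is_int by blast
  qed
  define \<tau> where "\<tau> = (\<lambda>g. m g div int s)"
  have T\<tau>: "T g = of_int (\<tau> g)" and m\<tau>: "m g = int s * \<tau> g" if g: "g \<in> carrier G" for g
  proof -
    obtain j where j: "T g = of_int j" using Tint[OF g] Ints_cases by auto
    have "of_int (int s * j) = (of_int (m g) :: complex)" using E[OF g] j by simp
    hence "m g = int s * j" by (simp only: of_int_eq_iff)
    hence "\<tau> g = j" unfolding \<tau>_def using spos by simp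
    thus "T g = of_int (\<tau> g)" "m g = int s * \<tau> g" using j \<open>m g = int s * j\<close> by auto
  qed
  have T1: "T \<one> = of_nat \<sigma>" unfolding T_def \<sigma>_def using lc_one[OF lc] by simp
  have \<tau>1: "\<tau> \<one> = int \<sigma>" using T\<tau>[OF one_closed] T1 by (metis of_int_eq_iff of_int_of_nat_eq)
  have ftwo: "(\<tau> g - int \<sigma>) * (\<tau> g - int \<sigma>) = - int n * (\<tau> g - int \<sigma>)" if g: "g \<in> carrier G" for g
  proof (rule two_vals)
    have "int s * (\<tau> g - int \<sigma>) = m g - m \<one>" using m\<tau>[OF g] m\<tau>[OF one_closed] \<tau>1 by (simp add: algebra_simps)
    also have "\<dots> = int n * (int (c g) - int (c \<one>) - b * ((if \<psi> g = 1 then 1 else 0) - 1))"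
      unfolding m_def using lc_one[OF lc] by (simp add: algebra_simps)
    finally have "int n dvd int s * (\<tau> g - int \<sigma>)" by (metis dvd_triv_left)
    moreover have "coprime (int n) (int s)" using cop unfolding n_def by simp
    ultimately show "int n dvd (\<tau> g - int \<sigma>)" using coprime_dvd_mult_right_iff by blast
    have "norm (T g) \<le> (\<Sum>t\<in>S. norm (\<psi> g ^ t))" unfolding T_def by (rule norm_sum)
    also have "\<dots> = of_nat \<sigma>" unfolding \<sigma>_def using norm_root1[OF pn[OF g] n0] by (simp add: norm_power)
    finally have "\<bar>\<tau> g\<bar> \<le> int \<sigma>" using T\<tau>[OF g] by (metis norm_of_int of_int_le_iff of_int_of_nat_eq of_int_abs)
    thus "- 2 * int \<sigma> \<le> \<tau> g - int \<sigma>" "\<tau> g - int \<sigma> \<le> 0" by auto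
    show "int \<sigma> < int n" using \<sigma>_le n0 by linarith
  qed
  have M1: "(\<Sum>g\<in>carrier G. T g) = 0"
  proof -
    have "(\<Sum>g\<in>carrier G. T g) = (\<Sum>t\<in>S. \<Sum>g\<in>carrier G. \<psi> g ^ t)" unfolding T_def by (rule sum.swap)
    also have "\<dots> = 0"
    proof (rule sum.neutral, intro ballI)
      fix t assume "t \<in> S"
      hence "0 < t" "t < char_order G \<psi>" using S_sub unfolding n_def by auto
      hence "\<not> principal_char G (\<lambda>x. \<psi> x ^ t)" by (rule nonprincipal_pow[OF fin lc])
      thus "(\<Sum>g\<in>carrier G. \<psi> g ^ t) = 0"
        using lc_sum_zero[OF fin lc_pow[OF lc]] by blast
    qed
    finally show ?thesis .
  qed
  have M2: "(\<Sum>g\<in>carrier G. T g * T g) = of_nat v * of_nat \<sigma>"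
  proof -
    have "(\<Sum>g\<in>carrier G. T g * T g) = (\<Sum>g\<in>carrier G. \<Sum>t\<in>S. \<Sum>t'\<in>S. \<psi> g ^ (t + t'))"
      unfolding T_def by (simp add: sum_product power_add)
    also have "\<dots> = (\<Sum>t\<in>S. \<Sum>t'\<in>S. \<Sum>g\<in>carrier G. \<psi> g ^ (t + t'))"
      by (simp add: sum.swap[of _ "carrier G"])
    also have "\<dots> = (\<Sum>t\<in>S. \<Sum>t'\<in>S. if t' = n - t then of_nat v else 0)"
    proof (intro sum.cong refl)
      fix t t' assume tt: "t \<in> S" "t' \<in> S"
      hence r: "0 < t" "t < n" "0 < t'" "t' < n" using S_sub by auto
      show "(\<Sum>g\<in>carrier G. \<psi> g ^ (t + t')) = (if t' = n - t then of_nat v else 0)"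
      proof (cases "t' = n - t")
        case True
        hence "t + t' = n" using r by simp
        thus ?thesis using True pn cG by simp
      next
        case False
        have "\<not> principal_char G (\<lambda>x. \<psi> x ^ (t + t'))"
        proof
          assume "principal_char G (\<lambda>x. \<psi> x ^ (t + t'))"
          hence "n dvd t + t'" using ord_dvd[OF fin lc] unfolding principal_char_def n_def by auto
          then obtain q where q: "t + t' = n * q" by auto
          have "0 < q" using q r by (metis add_pos_pos mult_0_right neq0_conv)
          moreover have "q < 2" using q r by (metis add_strict_mono mult_2_right mult_less_cancel1 not_less_iff_gr_or_eq)
          ultimately have "q = 1" by simp
          thus False using q False by simp
        qed
        thus ?thesis using False lc_sum_zero[OF fin lc_pow[OF lc]] by simp
      qed
    qed
    also have "\<dots> = (\<Sum>t\<in>S. of_nat v)"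
      by (intro sum.cong refl) (simp add: finS Ssym)
    finally show ?thesis unfolding \<sigma>_def by (simp add: mult.commute)
  qed
  have I1: "(\<Sum>g\<in>carrier G. \<tau> g) = 0"
  proof -
    have "of_int (\<Sum>g\<in>carrier G. \<tau> g) = (\<Sum>g\<in>carrier G. T g)" by (simp add: T\<tau>)
    thus ?thesis using M1 by (metis of_int_eq_0_iff)
  qed
  have I2: "(\<Sum>g\<in>carrier G. \<tau> g * \<tau> g) = int v * int \<sigma>"
  proof -
    have "of_int (\<Sum>g\<in>carrier G. \<tau> g * \<tau> g) = (\<Sum>g\<in>carrier G. T g * T g)" by (simp add: T\<tau>)
    hence "(of_int (\<Sum>g\<in>carrier G. \<tau> g * \<tau> g) :: complex) = of_int (int v * int \<sigma>)" using M2 by simp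
    thus ?thesis by (simp only: of_int_eq_iff)
  qed
  have "(\<Sum>g\<in>carrier G. (\<tau> g - int \<sigma>) * (\<tau> g - int \<sigma>)) =
        (\<Sum>g\<in>carrier G. \<tau> g * \<tau> g) - 2 * int \<sigma> * (\<Sum>g\<in>carrier G. \<tau> g) + int v * int \<sigma> * int \<sigma>"
    by (simp add: algebra_simps sum.distrib sum_subtractf sum_distrib_left cG)
  also have "\<dots> = int v * int \<sigma> + int v * int \<sigma> * int \<sigma>" using I1 I2 by simp
  finally have A1: "(\<Sum>g\<in>carrier G. (\<tau> g - int \<sigma>) * (\<tau> g - int \<sigma>)) = int v * int \<sigma> + int v * int \<sigma> * int \<sigma>" .
  have "(\<Sum>g\<in>carrier G. (\<tau> g - int \<sigma>) * (\<tau> g - int \<sigma>)) = (\<Sum>g\<in>carrier G. - int n * (\<tau> g - int \<sigma>))"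
    by (intro sum.cong refl ftwo)
  also have "\<dots> = - int n * (\<Sum>g\<in>carrier G. (\<tau> g - int \<sigma>))"
    by (simp only: sum_distrib_left)
  also have "(\<Sum>g\<in>carrier G. (\<tau> g - int \<sigma>)) = (\<Sum>g\<in>carrier G. \<tau> g) - int v * int \<sigma>"
    by (simp add: sum_subtractf cG)
  also have "- int n * ((\<Sum>g\<in>carrier G. \<tau> g) - int v * int \<sigma>) = int n * int v * int \<sigma>" using I1 by simp
  finally have "int v * int \<sigma> * (1 + int \<sigma> - int n) = 0" using A1 by (simp add: algebra_simps)
  hence \<sigma>cases: "\<sigma> = 0 \<or> \<sigma> = n - 1" using v0 by auto
  have m1: "m \<one> = int s * int \<sigma>" using m\<tau>[OF one_closed] \<tau>1 by simp
  have z1: "z 1 = char_sum \<psi> D" unfolding z_def by simp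
  have one_in: "1 \<in> {1..<n}" using n2 by auto
  from \<sigma>cases show ?thesis
  proof
    assume "\<sigma> = 0"
    hence "S = {}" using finS unfolding \<sigma>_def by simp
    hence "z 1 = of_int b" using zS[OF one_in] by simp
    moreover have "int k - b = int n * (int (c \<one>) - b)"
      using m1 \<open>\<sigma> = 0\<close> lc_one[OF lc] unfolding m_def by (simp add: algebra_simps)
    ultimately show ?thesis using z1 unfolding n_def by (metis dvd_triv_left)
  next
    assume "\<sigma> = n - 1"
    hence "S = {1..<n}" using finS S_sub unfolding \<sigma>_def by (intro card_subset_eq) auto
    hence "1 \<in> S" using one_in by simp
    hence "z 1 = of_int (b + int s)" using zS[OF one_in] by simp
    moreover have "int k - (b + int s) = int n * (int (c \<one>) - b - int s)"
      using m1 \<open>\<sigma> = n - 1\<close> lc_one[OF lc] n0 unfolding m_def by (simp add: algebra_simps of_nat_diff)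
    ultimately show ?thesis using z1 unfolding n_def by (metis dvd_triv_left)
  qed
qed

end

context group begin

lemma mixed:
  assumes fin: "finite (carrier G)" and pds: "is_PDS G D v k lam mu" and reg: "regular_PDS G D"
    and sq: "int s ^ 2 = PDS_Delta k lam mu" and spos: "0 < s"
    and lx: "linear_char G \<xi>" and nx: "\<not> principal_char G \<xi>"
    and lc: "linear_char G \<chi>" and nc: "\<not> principal_char G \<chi>"
    and cx: "coprime (char_order G \<xi>) s" and cc: "coprime (char_order G \<chi>) s"
    and bdef: "b = (int lam - int mu - int s) div 2"
    and vx: "char_sum \<xi> D = of_int (b + int s)" and vc: "char_sum \<chi> D = of_int b"
  shows False
proof -
  define n1 where "n1 = char_order G \<xi>"
  define n2 where "n2 = char_order G \<chi>"
  have bne: "(of_int (b + int s) :: complex) \<noteq> of_int b" using spos by simp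
  have d1: "int n1 dvd int k - (b + int s)"
    using coreL[OF fin pds reg sq spos lx nx cx bdef] vx bne unfolding n1_def by auto
  have d2: "int n2 dvd int k - b"
    using coreL[OF fin pds reg sq spos lc nc cc bdef] vc bne unfolding n2_def by auto
  have cxi: "coprime (int n1) (int s)" and cci: "coprime (int n2) (int s)" using cx cc unfolding n1_def n2_def by simp_all
  have n1ne: "n1 \<noteq> 1" using principal_iff[OF fin lx] nx unfolding n1_def by simp
  have n2ne: "n2 \<noteq> 1" using principal_iff[OF fin lc] nc unfolding n2_def by simp
  have unit1: "n1 = 1" if "int n1 dvd int s" 
    using coprime_common_divisor[OF cxi dvd_refl that] by simp
  have unit2: "n2 = 1" if "int n2 dvd int s" 
    using coprime_common_divisor[OF cci dvd_refl that] by simp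
  have c12: "coprime n1 n2"
  proof -
    have "coprime (int n1) (int n2)"
    proof (rule coprimeI)
      fix c assume "c dvd int n1" "c dvd int n2"
      hence "c dvd int k - b" "c dvd int k - (b + int s)" using d1 d2 dvd_trans by blast+
      hence "c dvd (int k - b) - (int k - (b + int s))" by (rule dvd_diff)
      hence "c dvd int s" by simp
      thus "is_unit c" using coprime_common_divisor[OF cxi \<open>c dvd int n1\<close>] by simp
    qed
    thus ?thesis by simp
  qed
  define \<psi> where "\<psi> = (\<lambda>x. \<xi> x * \<chi> x)"
  have lp: "linear_char G \<psi>" unfolding \<psi>_def by (rule lc_mult[OF lx lc])
  define n3 where "n3 = char_order G \<psi>"
  have px: "\<And>x. x \<in> carrier G \<Longrightarrow> \<xi> x ^ n1 = 1" using ord_props[OF fin lx] unfolding n1_def by auto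
  have pc: "\<And>x. x \<in> carrier G \<Longrightarrow> \<chi> x ^ n2 = 1" using ord_props[OF fin lc] unfolding n2_def by auto
  have pp: "\<And>x. x \<in> carrier G \<Longrightarrow> \<psi> x ^ n3 = 1" using ord_props[OF fin lp] unfolding n3_def by auto
  have "n3 dvd n1 * n2" unfolding n3_def
  proof (rule ord_dvd[OF fin lp], intro ballI)
    fix x assume x: "x \<in> carrier G"
    have "\<psi> x ^ (n1 * n2) = (\<xi> x ^ n1) ^ n2 * (\<chi> x ^ n2) ^ n1"
      unfolding \<psi>_def by (simp add: power_mult_distrib flip: power_mult) (simp add: mult.commute)
    thus "\<psi> x ^ (n1 * n2) = 1" using px[OF x] pc[OF x] by simp
  qed
  moreover have "coprime (n1 * n2) s" using cx cc unfolding n1_def n2_def by simp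
  ultimately have c3: "coprime n3 s" using coprime_divisors[OF _ dvd_refl] by blast
  have "n1 dvd n3 * n2" unfolding n1_def
  proof (rule ord_dvd[OF fin lx], intro ballI)
    fix x assume x: "x \<in> carrier G"
    have "(\<psi> x ^ n3) ^ n2 = \<xi> x ^ (n3 * n2) * (\<chi> x ^ n2) ^ n3"
      unfolding \<psi>_def by (simp add: power_mult_distrib flip: power_mult) (simp add: mult.commute)
    thus "\<xi> x ^ (n3 * n2) = 1" using pp[OF x] pc[OF x] by simp
  qed
  hence "n1 dvd n3" using c12 by (simp add: coprime_dvd_mult_left_iff)
  have "n2 dvd n3 * n1" unfolding n2_def
  proof (rule ord_dvd[OF fin lc], intro ballI)
    fix x assume x: "x \<in> carrier G"
    have "(\<psi> x ^ n3) ^ n1 = (\<xi> x ^ n1) ^ n3 * \<chi> x ^ (n3 * n1)"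
      unfolding \<psi>_def by (simp add: power_mult_distrib flip: power_mult) (simp add: mult.commute)
    thus "\<chi> x ^ (n3 * n1) = 1" using pp[OF x] px[OF x] by simp
  qed
  hence "n2 dvd n3" using c12 by (simp add: coprime_dvd_mult_left_iff coprime_commute)
  have np: "\<not> principal_char G \<psi>"
    using principal_iff[OF fin lp] \<open>n1 dvd n3\<close> n1ne unfolding n3_def by auto
  from coreL[OF fin pds reg sq spos lp np c3[unfolded n3_def] bdef]
  show False
  proof (elim disjE conjE)
    assume "int (char_order G \<psi>) dvd int k - b"
    hence "int n1 dvd int k - b" using \<open>n1 dvd n3\<close> unfolding n3_def by (meson dvd_trans int_dvd_int_iff)
    hence "int n1 dvd (int k - b) - (int k - (b + int s))" using d1 by (rule dvd_diff)
    hence "int n1 dvd int s" by simp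
    thus False using unit1 n1ne by blast
  next
    assume "int (char_order G \<psi>) dvd int k - (b + int s)"
    hence "int n2 dvd int k - (b + int s)" using \<open>n2 dvd n3\<close> unfolding n3_def by (meson dvd_trans int_dvd_int_iff)
    hence "int n2 dvd (int k - b) - (int k - (b + int s))" using d2 by (rule dvd_diff[rotated])
    hence "int n2 dvd int s" by simp
    thus False using unit2 n2ne by blast
  qed
qed

end

theorem mainTheorem7:
  fixes G :: "('a, 'b) monoid_scheme" and D :: "'a set"
    and v k lam mu s :: nat and \<xi> \<chi> :: "'a \<Rightarrow> complex"
  assumes "group G" and "finite (carrier G)"
    and "is_PDS G D v k lam mu" and "regular_PDS G D"
    and "0 < mu" and "mu < k"
    and "int s ^ 2 = PDS_Delta k lam mu"
    and "linear_char G \<xi>" and "\<not> principal_char G \<xi>"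
    and "linear_char G \<chi>" and "\<not> principal_char G \<chi>"
    and "coprime (char_order G \<xi>) s" and "coprime (char_order G \<chi>) s"
  shows "char_sum \<xi> D = char_sum \<chi> D"
proof -
  interpret group G by fact
  define b where "b = (int lam - int mu - int s) div 2"
  have vx: "char_sum \<xi> D = of_int b \<or> char_sum \<xi> D = of_int (b + int s)"
    using quad_values[OF quad[OF assms(2,3,4,8,9)] assms(7)] unfolding b_def .
  have vc: "char_sum \<chi> D = of_int b \<or> char_sum \<chi> D = of_int (b + int s)"
    using quad_values[OF quad[OF assms(2,3,4,10,11)] assms(7)] unfolding b_def .
  show ?thesis
  proof (rule ccontr)
    assume ne: "char_sum \<xi> D \<noteq> char_sum \<chi> D"
    hence spos: "0 < s" using vx vc by (cases "s = 0") auto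
    from vx vc ne show False
    proof (elim disjE)
      assume "char_sum \<xi> D = of_int b" "char_sum \<chi> D = of_int (b + int s)"
      thus False using mixed[OF assms(2,3,4,7) spos assms(10,11,8,9,13,12) b_def] by blast
    next
      assume "char_sum \<xi> D = of_int (b + int s)" "char_sum \<chi> D = of_int b"
      thus False using mixed[OF assms(2,3,4,7) spos assms(8,9,10,11,12,13) b_def] by blast
    qed auto
  qed
qed

end
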